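(* In the variety $\mathbf{P}_3$ of $3$-dimensional complex Poisson algebras: (1) the Zariski closure of $\bigcup_{\alpha\in\mathbb{C}}O(\mathcal{P}_{3,4}^{\alpha})$ contains the orbit closures of $\mathcal{P}_{3,3}$, $\mathcal{P}_{3,2}$ and $\mathcal{P}_{3,1}$; (2) the Zariski closure of $\bigcup_{\alpha\in\mathbb{C}}O(\mathcal{P}_{3,16}^{\alpha})$ contains the orbit closures of $\mathcal{P}_{3,15}$, $\mathcal{P}_{3,13}$, $\mathcal{P}_{3,2}$ and $\mathcal{P}_{3,1}$. Here (basis $e_1,e_2,e_3$, only nonzero products listed up to commutativity/anticommutativity): $\mathcal{P}_{3,1}$: zero; $\mathcal{P}_{3,2}$: $\{e_1,e_2\}=e_3$; $\mathcal{P}_{3,3}$: $\{e_1,e_2\}=e_2,\{e_1,e_3\}=e_2+e_3$; $\mathcal{P}_{3,4}^{\alpha}$: $\{e_1,e_2\}=e_2,\{e_1,e_3\}=\alpha e_3$; $\mathcal{P}_{3,13}$: $e_1\cdot e_1=e_2$; $\mathcal{P}_{3,15}$: $e_1\cdot e_1=e_2,\{e_1,e_3\}=e_2$; $\mathcal{P}_{3,16}^{\alpha}$: $e_1\cdot e_2=e_3,\{e_1,e_2\}=\alpha e_3$.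
   Context: Fix a $3$-dimensional complex vector space $V$; pairs $(\mu,\mu')$ of bilinear maps on $V$ are identified with their structure constants in $\mathbb{C}^{54}$. $\mathbf{P}_3$ is the affine variety of pairs defining Poisson algebras ($\mu$ commutative associative, $\mu'$ Lie, Leibniz identity $\mu'(\mu(x,y),z)=\mu(\mu'(x,z),y)+\mu(x,\mu'(y,z))$). $\mathrm{GL}(V)$ acts by $(g*(\mu,\mu'))(x,y)=(g\mu(g^{-1}x,g^{-1}y),g\mu'(g^{-1}x,g^{-1}y))$, and $O(\mathcal{P})$ denotes the orbit of any structure representing $\mathcal{P}$. Closures are in the Zariski topology. *)

theory Defs
  imports "HOL-Analysis.Analysis"
begin

datatype idx = E1 | E2 | E3

lemma UNIV_idx: "(UNIV :: idx set) = {E1, E2, E3}"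
  by (auto intro: idx.exhaust)

instance idx :: finite
  by standard (simp add: UNIV_idx)

text \<open>Structure constants of a bilinear map mu on V:
  c i j k = coefficient of e_k in mu(e_i, e_j).  A pair (mu, mu') is a point of C^54.\<close>
type_synonym sconst = "idx \<Rightarrow> idx \<Rightarrow> idx \<Rightarrow> complex"
type_synonym spair = "sconst \<times> sconst"

definition bil :: "sconst \<Rightarrow> complex^idx \<Rightarrow> complex^idx \<Rightarrow> complex^idx" where
  "bil c x y = (\<chi> k. \<Sum>i\<in>UNIV. \<Sum>j\<in>UNIV. x$i * y$j * c i j k)"

definition basis_vec :: "idx \<Rightarrow> complex^idx" where
  "basis_vec i = (\<chi> j. if j = i then 1 else 0)"

definition act :: "complex^idx^idx \<Rightarrow> sconst \<Rightarrow> sconst" where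
  "act g c = (\<lambda>i j k. (g *v bil c (matrix_inv g *v basis_vec i) (matrix_inv g *v basis_vec j)) $ k)"

definition act_pair :: "complex^idx^idx \<Rightarrow> spair \<Rightarrow> spair" where
  "act_pair g p = (act g (fst p), act g (snd p))"

definition orbit :: "spair \<Rightarrow> spair set" where
  "orbit p = {act_pair g p | g. invertible g}"

inductive_set poly_fun :: "(spair \<Rightarrow> complex) set" where
  const: "(\<lambda>_. a) \<in> poly_fun"
| coord1: "(\<lambda>p. fst p i j k) \<in> poly_fun"
| coord2: "(\<lambda>p. snd p i j k) \<in> poly_fun"
| add: "f \<in> poly_fun \<Longrightarrow> g \<in> poly_fun \<Longrightarrow> (\<lambda>p. f p + g p) \<in> poly_fun"
| mult: "f \<in> poly_fun \<Longrightarrow> g \<in> poly_fun \<Longrightarrow> (\<lambda>p. f p * g p) \<in> poly_fun"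

definition zariski_closed :: "spair set \<Rightarrow> bool" where
  "zariski_closed C \<longleftrightarrow> (\<exists>F \<subseteq> poly_fun. C = {p. \<forall>f\<in>F. f p = 0})"

definition zariski_closure :: "spair set \<Rightarrow> spair set" where
  "zariski_closure S = \<Inter>{C. zariski_closed C \<and> S \<subseteq> C}"

text \<open>An entry (a,b,k,c) means: the product of e_a and e_b has e_k-coefficient c.
  comm_sc: commutative extension; lie_sc: anticommutative extension.\<close>
definition comm_sc :: "(idx \<times> idx \<times> idx \<times> complex) list \<Rightarrow> sconst" where
  "comm_sc l i j k = sum_list [c. (a,b,d,c) \<leftarrow> l, d = k \<and> ((a = i \<and> b = j) \<or> (a = j \<and> b = i))]"

definition lie_sc :: "(idx \<times> idx \<times> idx \<times> complex) list \<Rightarrow> sconst" where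
  "lie_sc l i j k = sum_list [c. (a,b,d,c) \<leftarrow> l, a = i \<and> b = j \<and> d = k]
                  - sum_list [c. (a,b,d,c) \<leftarrow> l, a = j \<and> b = i \<and> d = k]"

definition P3_1 :: spair where "P3_1 = (comm_sc [], lie_sc [])"
definition P3_2 :: spair where "P3_2 = (comm_sc [], lie_sc [(E1,E2,E3,1)])"
definition P3_3 :: spair where
  "P3_3 = (comm_sc [], lie_sc [(E1,E2,E2,1), (E1,E3,E2,1), (E1,E3,E3,1)])"
definition P3_4 :: "complex \<Rightarrow> spair" where
  "P3_4 \<alpha> = (comm_sc [], lie_sc [(E1,E2,E2,1), (E1,E3,E3,\<alpha>)])"
definition P3_13 :: spair where "P3_13 = (comm_sc [(E1,E1,E2,1)], lie_sc [])"
definition P3_15 :: spair where "P3_15 = (comm_sc [(E1,E1,E2,1)], lie_sc [(E1,E3,E2,1)])"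
definition P3_16 :: "complex \<Rightarrow> spair" where
  "P3_16 \<alpha> = (comm_sc [(E1,E2,E3,1)], lie_sc [(E1,E2,E3,\<alpha>)])"

end

theory Submission
  imports Defs
begin


lemma minv_unique:
  fixes A B :: "complex^idx^idx"
  assumes "A ** B = mat 1" "B ** A = mat 1"
  shows "matrix_inv A = B"
proof -
  have ex: "\<exists>A'. A ** A' = mat 1 \<and> A' ** A = mat 1" using assms by blast
  then have s: "A ** matrix_inv A = mat 1 \<and> matrix_inv A ** A = mat 1"
    unfolding matrix_inv_def by (rule someI_ex)
  have "matrix_inv A = matrix_inv A ** (A ** B)" using assms by simp
  also have "\<dots> = (matrix_inv A ** A) ** B" by (simp add: matrix_mul_assoc)
  also have "\<dots> = B" using s by simp
  finally show ?thesis .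
qed

lemma minv_props:
  fixes A :: "complex^idx^idx"
  assumes "invertible A"
  shows "A ** matrix_inv A = mat 1 \<and> matrix_inv A ** A = mat 1"
  using assms unfolding invertible_def matrix_inv_def by (rule someI_ex)

lemma minv_mult:
  fixes A B :: "complex^idx^idx"
  assumes "invertible A" "invertible B"
  shows "matrix_inv (A ** B) = matrix_inv B ** matrix_inv A"
proof (rule minv_unique)
  note a = minv_props[OF assms(1)] and b = minv_props[OF assms(2)]
  have "A ** B ** (matrix_inv B ** matrix_inv A) = A ** (B ** matrix_inv B) ** matrix_inv A"
    by (simp add: matrix_mul_assoc)
  then show "A ** B ** (matrix_inv B ** matrix_inv A) = mat 1" using a b by simp
  have "matrix_inv B ** matrix_inv A ** (A ** B) = matrix_inv B ** (matrix_inv A ** A) ** B"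
    by (simp add: matrix_mul_assoc)
  then show "matrix_inv B ** matrix_inv A ** (A ** B) = mat 1" using a b by simp
qed

lemma bil_act_gen:
  fixes g M :: "complex^idx^idx"
  shows "bil (\<lambda>i j k. (g *v bil c (M *v basis_vec i) (M *v basis_vec j)) $ k) x y
       = g *v bil c (M *v x) (M *v y)"
  unfolding vec_eq_iff
  by (simp add: bil_def matrix_vector_mult_def basis_vec_def UNIV_idx algebra_simps)

lemma bil_act: "bil (act h c) x y = h *v bil c (matrix_inv h *v x) (matrix_inv h *v y)"
  unfolding act_def by (rule bil_act_gen)

lemma act_comp:
  assumes "invertible g" "invertible h"
  shows "act g (act h c) = act (g ** h) c"
proof (intro ext)
  fix i j k
  have "act g (act h c) i j k = (g *v bil (act h c) (matrix_inv g *v basis_vec i) (matrix_inv g *v basis_vec j)) $ k"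
    by (simp only: act_def[of g])
  also have "\<dots> = (g *v (h *v bil c (matrix_inv h *v (matrix_inv g *v basis_vec i)) (matrix_inv h *v (matrix_inv g *v basis_vec j)))) $ k"
    by (simp only: bil_act)
  also have "\<dots> = ((g ** h) *v bil c ((matrix_inv h ** matrix_inv g) *v basis_vec i) ((matrix_inv h ** matrix_inv g) *v basis_vec j)) $ k"
    by (simp only: matrix_vector_mul_assoc)
  also have "\<dots> = act (g ** h) c i j k"
    by (simp only: act_def[of "g ** h"] minv_mult[OF assms])
  finally show "act g (act h c) i j k = act (g ** h) c i j k" .
qed

lemma act_pair_comp:
  assumes "invertible g" "invertible h"
  shows "act_pair g (act_pair h X) = act_pair (g ** h) X"
  using act_comp[OF assms] by (simp add: act_pair_def)

lemma union_orbit_inv: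
  assumes "invertible g" "X \<in> (\<Union>\<alpha>. orbit (Q \<alpha>))"
  shows "act_pair g X \<in> (\<Union>\<alpha>. orbit (Q \<alpha>))"
proof -
  obtain \<alpha> h where h: "invertible h" "X = act_pair h (Q \<alpha>)" using assms(2) unfolding orbit_def by blast
  then have "act_pair g X = act_pair (g ** h) (Q \<alpha>)" using act_pair_comp[OF assms(1) h(1)] by simp
  moreover have "invertible (g ** h)" using invertible_mult[OF assms(1) h(1)] .
  ultimately show ?thesis unfolding orbit_def by blast
qed

lemma in_closure_iff:
  "p \<in> zariski_closure S \<longleftrightarrow> (\<forall>f\<in>poly_fun. (\<forall>s\<in>S. f s = 0) \<longrightarrow> f p = 0)"
proof
  assume p: "p \<in> zariski_closure S"
  show "\<forall>f\<in>poly_fun. (\<forall>s\<in>S. f s = 0) \<longrightarrow> f p = 0"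
  proof (intro ballI impI)
    fix f assume f: "f \<in> poly_fun" "\<forall>s\<in>S. f s = 0"
    have "zariski_closed {p. f p = 0}" unfolding zariski_closed_def
      by (rule exI[of _ "{f}"]) (use f in auto)
    moreover have "S \<subseteq> {p. f p = 0}" using f by auto
    ultimately show "f p = 0" using p unfolding zariski_closure_def by blast
  qed
next
  assume h: "\<forall>f\<in>poly_fun. (\<forall>s\<in>S. f s = 0) \<longrightarrow> f p = 0"
  show "p \<in> zariski_closure S" unfolding zariski_closure_def
  proof (rule InterI)
    fix C assume "C \<in> {C. zariski_closed C \<and> S \<subseteq> C}"
    then obtain F where F: "F \<subseteq> poly_fun" "C = {p. \<forall>f\<in>F. f p = 0}" "S \<subseteq> C"
      unfolding zariski_closed_def by blast
    have "\<forall>f\<in>F. f p = 0"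
    proof
      fix f assume "f \<in> F"
      then have "f \<in> poly_fun" "\<forall>s\<in>S. f s = 0" using F by auto
      then show "f p = 0" using h by blast
    qed
    then show "p \<in> C" using F(2) by simp
  qed
qed

lemma closure_sub:
  assumes "A \<subseteq> zariski_closure B"
  shows "zariski_closure A \<subseteq> zariski_closure B"
proof
  fix p assume p: "p \<in> zariski_closure A"
  show "p \<in> zariski_closure B" unfolding in_closure_iff
  proof (intro ballI impI)
    fix f assume f: "f \<in> poly_fun" "\<forall>s\<in>B. f s = 0"
    have "\<forall>s\<in>A. f s = 0"
    proof
      fix s assume "s \<in> A"
      then have "s \<in> zariski_closure B" using assms by blast
      then show "f s = 0" using f in_closure_iff by blast
    qed
    then show "f p = 0" using p f(1) unfolding in_closure_iff by blast
  qed
qed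

lemma poly_cont:
  assumes "f \<in> poly_fun"
    and "\<And>i j k. isCont (\<lambda>t. fst (r t) i j k) 0"
    and "\<And>i j k. isCont (\<lambda>t. snd (r t) i j k) 0"
  shows "isCont (\<lambda>t::complex. f (r t)) 0"
  using assms(1)
proof (induction f rule: poly_fun.induct)
  case (const a) show ?case by simp
next
  case (coord1 i j k) show ?case using assms(2) by simp
next
  case (coord2 i j k) show ?case using assms(3) by simp
next
  case (add f g) then show ?case by (simp add: continuous_add)
next
  case (mult f g) then show ?case by (simp add: continuous_mult)
qed

lemma act_cont:
  assumes "\<And>i j k. isCont (\<lambda>t. c t i j k) 0"
  shows "isCont (\<lambda>t::complex. act g (c t) i j k) 0"
  unfolding act_def bil_def matrix_vector_mult_def
  unfolding vec_lambda_beta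
  by (intro continuous_intros assms)


lemma zero_lim:
  assumes "isCont F (0::complex)" "\<And>t. t \<noteq> 0 \<Longrightarrow> F t = (0::complex)"
  shows "F 0 = 0"
proof -
  have "(F \<longlongrightarrow> F 0) (at 0)" using assms(1) isCont_def by blast
  moreover have "(F \<longlongrightarrow> 0) (at 0)"
    by (rule tendsto_eventually) (auto simp: eventually_at intro!: exI[of _ 1] assms(2))
  ultimately show ?thesis using tendsto_unique[of "at (0::complex)" F "F 0" 0] by simp
qed

lemma degen:
  fixes q :: "complex \<Rightarrow> spair"
  assumes inv: "\<And>g X. invertible g \<Longrightarrow> X \<in> S \<Longrightarrow> act_pair g X \<in> S"
    and qS: "\<And>t. t \<noteq> 0 \<Longrightarrow> q t \<in> S"
    and c1: "\<And>i j k. isCont (\<lambda>t. fst (q t) i j k) 0"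
    and c2: "\<And>i j k. isCont (\<lambda>t. snd (q t) i j k) 0"
  shows "zariski_closure (orbit (q 0)) \<subseteq> zariski_closure S"
proof (rule closure_sub, rule subsetI)
  fix Y assume "Y \<in> orbit (q 0)"
  then obtain g where g: "invertible g" "Y = act_pair g (q 0)" unfolding orbit_def by blast
  show "Y \<in> zariski_closure S" unfolding in_closure_iff
  proof (intro ballI impI)
    fix f assume f: "f \<in> poly_fun" "\<forall>s\<in>S. f s = 0"
    let ?r = "\<lambda>t. act_pair g (q t)"
    have r1: "\<And>i j k. isCont (\<lambda>t. fst (?r t) i j k) 0"
      by (simp add: act_pair_def act_cont[of "\<lambda>t. fst (q t)", OF c1])
    have r2: "\<And>i j k. isCont (\<lambda>t. snd (?r t) i j k) 0"
      by (simp add: act_pair_def act_cont[of "\<lambda>t. snd (q t)", OF c2])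
    have "isCont (\<lambda>t. f (?r t)) 0"
      by (rule poly_cont[OF f(1) r1 r2])
    moreover have "\<And>t. t \<noteq> 0 \<Longrightarrow> f (?r t) = 0" using f(2) inv[OF g(1) qS] by blast
    ultimately have "f (?r 0) = 0" by (rule zero_lim)
    then show "f Y = 0" using g by simp
  qed
qed



definition mat3 :: "complex \<Rightarrow> complex \<Rightarrow> complex \<Rightarrow> complex \<Rightarrow> complex \<Rightarrow> complex
   \<Rightarrow> complex \<Rightarrow> complex \<Rightarrow> complex \<Rightarrow> complex^idx^idx" where
  "mat3 a11 a12 a13 a21 a22 a23 a31 a32 a33 = (\<chi> r s. case r of
      E1 \<Rightarrow> (case s of E1 \<Rightarrow> a11 | E2 \<Rightarrow> a12 | E3 \<Rightarrow> a13)
    | E2 \<Rightarrow> (case s of E1 \<Rightarrow> a21 | E2 \<Rightarrow> a22 | E3 \<Rightarrow> a23)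
    | E3 \<Rightarrow> (case s of E1 \<Rightarrow> a31 | E2 \<Rightarrow> a32 | E3 \<Rightarrow> a33))"

lemma mat3_nth[simp]:
  "mat3 a11 a12 a13 a21 a22 a23 a31 a32 a33 $ E1 $ E1 = a11"
  "mat3 a11 a12 a13 a21 a22 a23 a31 a32 a33 $ E1 $ E2 = a12"
  "mat3 a11 a12 a13 a21 a22 a23 a31 a32 a33 $ E1 $ E3 = a13"
  "mat3 a11 a12 a13 a21 a22 a23 a31 a32 a33 $ E2 $ E1 = a21"
  "mat3 a11 a12 a13 a21 a22 a23 a31 a32 a33 $ E2 $ E2 = a22"
  "mat3 a11 a12 a13 a21 a22 a23 a31 a32 a33 $ E2 $ E3 = a23"
  "mat3 a11 a12 a13 a21 a22 a23 a31 a32 a33 $ E3 $ E1 = a31"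
  "mat3 a11 a12 a13 a21 a22 a23 a31 a32 a33 $ E3 $ E2 = a32"
  "mat3 a11 a12 a13 a21 a22 a23 a31 a32 a33 $ E3 $ E3 = a33"
  by (simp_all add: mat3_def)

lemma all_idx: "(\<forall>i. P i) = (P E1 \<and> P E2 \<and> P E3)"
  by (metis idx.exhaust)

lemma mat_eq3: "(A::complex^idx^idx) = B \<longleftrightarrow>
   A$E1$E1 = B$E1$E1 \<and> A$E1$E2 = B$E1$E2 \<and> A$E1$E3 = B$E1$E3 \<and>
   A$E2$E1 = B$E2$E1 \<and> A$E2$E2 = B$E2$E2 \<and> A$E2$E3 = B$E2$E3 \<and>
   A$E3$E1 = B$E3$E1 \<and> A$E3$E2 = B$E3$E2 \<and> A$E3$E3 = B$E3$E3"
  by (simp add: vec_eq_iff all_idx)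

lemma act_explicit:
  fixes G H :: "complex^idx^idx"
  assumes "G ** H = mat 1" "H ** G = mat 1"
  shows "act G c i j k = (\<Sum>l\<in>UNIV. G$k$l * (\<Sum>a\<in>UNIV. \<Sum>b\<in>UNIV. H$a$i * H$b$j * c a b l))"
  unfolding act_def minv_unique[OF assms] bil_def matrix_vector_mult_def basis_vec_def
  by (simp add: if_distrib cong: if_cong)

lemma inv_of: "(G::complex^idx^idx) ** H = mat 1 \<Longrightarrow> H ** G = mat 1 \<Longrightarrow> invertible G"
  unfolding invertible_def by blast




lemma lie_sc_Nil[simp]: "lie_sc [] i j k = 0" by (simp add: lie_sc_def)
lemma comm_sc_Nil[simp]: "comm_sc [] i j k = 0" by (simp add: comm_sc_def)
lemma lie_sc_Cons[simp]: "lie_sc ((a,b,d,c)#l) i j k = (if a=i \<and> b=j \<and> d=k then c else 0) - (if a=j \<and> b=i \<and> d=k then c else 0) + lie_sc l i j k"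
proof -
  have 1: "sum_list [c. (a,b,d,c) \<leftarrow> (a,b,d,c)#l, a = i \<and> b = j \<and> d = k] = (if a=i \<and> b=j \<and> d=k then c else 0) + sum_list [c. (a,b,d,c) \<leftarrow> l, a = i \<and> b = j \<and> d = k]"
    by simp
  have 2: "sum_list [c. (a,b,d,c) \<leftarrow> (a,b,d,c)#l, a = j \<and> b = i \<and> d = k] = (if a=j \<and> b=i \<and> d=k then c else 0) + sum_list [c. (a,b,d,c) \<leftarrow> l, a = j \<and> b = i \<and> d = k]"
    by simp
  show ?thesis unfolding lie_sc_def 1 2 by (simp add: algebra_simps)
qed
lemma comm_sc_Cons[simp]: "comm_sc ((a,b,d,c)#l) i j k = (if d=k \<and> ((a=i \<and> b=j) \<or> (a=j \<and> b=i)) then c else 0) + comm_sc l i j k"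
proof -
  have 1: "sum_list [c. (a,b,d,c) \<leftarrow> (a,b,d,c)#l, d = k \<and> ((a = i \<and> b = j) \<or> (a = j \<and> b = i))] = (if d=k \<and> ((a=i \<and> b=j) \<or> (a=j \<and> b=i)) then c else 0) + sum_list [c. (a,b,d,c) \<leftarrow> l, d = k \<and> ((a = i \<and> b = j) \<or> (a = j \<and> b = i))]"
    by auto
  show ?thesis unfolding comm_sc_def 1 ..
qed
lemma degen_union:
  fixes q :: "complex \<Rightarrow> spair"
  assumes "\<And>t. t \<noteq> 0 \<Longrightarrow> q t \<in> (\<Union>\<alpha>. orbit (Q \<alpha>))"
    and "\<And>i j k. isCont (\<lambda>t. fst (q t) i j k) 0"
    and "\<And>i j k. isCont (\<lambda>t. snd (q t) i j k) 0"
  shows "zariski_closure (orbit (q 0)) \<subseteq> zariski_closure (\<Union>\<alpha>. orbit (Q \<alpha>))"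
  by (rule degen[OF union_orbit_inv assms])

definition G1a :: "complex \<Rightarrow> complex^idx^idx" where "G1a t = mat3 1 0 0 0 (-1/t) (1/t) 0 1 0"
definition H1a :: "complex \<Rightarrow> complex^idx^idx" where "H1a t = mat3 1 0 0 0 0 1 0 t 1"
definition q1a :: "complex \<Rightarrow> spair" where "q1a t = (comm_sc [], lie_sc [(E1,E2,E2,1+t),(E1,E3,E2,1),(E1,E3,E3,1)])"

lemma q1a_in:
  assumes t: "t \<noteq> 0"
  shows "q1a t \<in> (\<Union>\<alpha>. orbit (P3_4 \<alpha>))"
proof -
  have i1: "G1a t ** H1a t = mat 1" "H1a t ** G1a t = mat 1"
    using t by (simp_all add: mat_eq3 G1a_def H1a_def matrix_matrix_mult_def UNIV_idx mat_def field_simps)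
  have e1: "act (G1a t) (fst (P3_4 (1+t))) i j k = fst (q1a t) i j k" for i j k
    unfolding act_explicit[OF i1]
    using t by (cases i; cases j; cases k) (simp_all add: UNIV_idx G1a_def H1a_def P3_4_def q1a_def, (simp_all add: field_simps)?)
  have e2: "act (G1a t) (snd (P3_4 (1+t))) i j k = snd (q1a t) i j k" for i j k
    unfolding act_explicit[OF i1]
    using t by (cases i; cases j; cases k) (simp_all add: UNIV_idx G1a_def H1a_def P3_4_def q1a_def, (simp_all add: field_simps)?)
  have "act_pair (G1a t) (P3_4 (1+t)) = q1a t"
    unfolding act_pair_def using e1 e2 by (simp add: prod_eq_iff fun_eq_iff)
  then have "\<exists>g. q1a t = act_pair g (P3_4 (1+t)) \<and> invertible g" using inv_of[OF i1] by metis
  then have "q1a t \<in> orbit (P3_4 (1+t))" unfolding orbit_def by simp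
  then show ?thesis by blast
qed

lemma q1a_cont1: "isCont (\<lambda>t. fst (q1a t) i j k) 0"
  by (cases i; cases j; cases k) (simp_all add: q1a_def)

lemma q1a_cont2: "isCont (\<lambda>t. snd (q1a t) i j k) 0"
  by (cases i; cases j; cases k) (simp_all add: q1a_def)

lemma q1a_0: "q1a 0 = P3_3"
  by (simp add: q1a_def P3_3_def prod_eq_iff fun_eq_iff all_idx)

lemma deg1a: "zariski_closure (orbit P3_3) \<subseteq> zariski_closure (\<Union>\<alpha>. orbit (P3_4 \<alpha>))"
  using degen_union[of q1a P3_4, OF q1a_in q1a_cont1 q1a_cont2] q1a_0 by simp

definition G1b :: "complex \<Rightarrow> complex^idx^idx" where "G1b t = mat3 (1/t) 0 0 0 0 1 0 (1/t) (-1/t)"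
definition H1b :: "complex \<Rightarrow> complex^idx^idx" where "H1b t = mat3 t 0 0 0 1 t 0 1 0"
definition q1b :: "complex \<Rightarrow> spair" where "q1b t = (comm_sc [], lie_sc [(E1,E2,E3,1),(E1,E3,E3,t)])"

lemma q1b_in:
  assumes t: "t \<noteq> 0"
  shows "q1b t \<in> (\<Union>\<alpha>. orbit (P3_4 \<alpha>))"
proof -
  have i1: "G1b t ** H1b t = mat 1" "H1b t ** G1b t = mat 1"
    using t by (simp_all add: mat_eq3 G1b_def H1b_def matrix_matrix_mult_def UNIV_idx mat_def field_simps)
  have e1: "act (G1b t) (fst (P3_4 (0))) i j k = fst (q1b t) i j k" for i j k
    unfolding act_explicit[OF i1]
    using t by (cases i; cases j; cases k) (simp_all add: UNIV_idx G1b_def H1b_def P3_4_def q1b_def, (simp_all add: field_simps)?)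
  have e2: "act (G1b t) (snd (P3_4 (0))) i j k = snd (q1b t) i j k" for i j k
    unfolding act_explicit[OF i1]
    using t by (cases i; cases j; cases k) (simp_all add: UNIV_idx G1b_def H1b_def P3_4_def q1b_def, (simp_all add: field_simps)?)
  have "act_pair (G1b t) (P3_4 (0)) = q1b t"
    unfolding act_pair_def using e1 e2 by (simp add: prod_eq_iff fun_eq_iff)
  then have "\<exists>g. q1b t = act_pair g (P3_4 (0)) \<and> invertible g" using inv_of[OF i1] by metis
  then have "q1b t \<in> orbit (P3_4 (0))" unfolding orbit_def by simp
  then show ?thesis by blast
qed

lemma q1b_cont1: "isCont (\<lambda>t. fst (q1b t) i j k) 0"
  by (cases i; cases j; cases k) (simp_all add: q1b_def)

lemma q1b_cont2: "isCont (\<lambda>t. snd (q1b t) i j k) 0"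
  by (cases i; cases j; cases k) (simp_all add: q1b_def)

lemma q1b_0: "q1b 0 = P3_2"
  by (simp add: q1b_def P3_2_def prod_eq_iff fun_eq_iff all_idx)

lemma deg1b: "zariski_closure (orbit P3_2) \<subseteq> zariski_closure (\<Union>\<alpha>. orbit (P3_4 \<alpha>))"
  using degen_union[of q1b P3_4, OF q1b_in q1b_cont1 q1b_cont2] q1b_0 by simp

definition G1c :: "complex \<Rightarrow> complex^idx^idx" where "G1c t = mat3 (1/t) 0 0 0 (1/t) 0 0 0 (1/t)"
definition H1c :: "complex \<Rightarrow> complex^idx^idx" where "H1c t = mat3 t 0 0 0 t 0 0 0 t"
definition q1c :: "complex \<Rightarrow> spair" where "q1c t = (comm_sc [], lie_sc [(E1,E2,E2,t)])"

lemma q1c_in: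
  assumes t: "t \<noteq> 0"
  shows "q1c t \<in> (\<Union>\<alpha>. orbit (P3_4 \<alpha>))"
proof -
  have i1: "G1c t ** H1c t = mat 1" "H1c t ** G1c t = mat 1"
    using t by (simp_all add: mat_eq3 G1c_def H1c_def matrix_matrix_mult_def UNIV_idx mat_def field_simps)
  have e1: "act (G1c t) (fst (P3_4 (0))) i j k = fst (q1c t) i j k" for i j k
    unfolding act_explicit[OF i1]
    using t by (cases i; cases j; cases k) (simp_all add: UNIV_idx G1c_def H1c_def P3_4_def q1c_def, (simp_all add: field_simps)?)
  have e2: "act (G1c t) (snd (P3_4 (0))) i j k = snd (q1c t) i j k" for i j k
    unfolding act_explicit[OF i1]
    using t by (cases i; cases j; cases k) (simp_all add: UNIV_idx G1c_def H1c_def P3_4_def q1c_def, (simp_all add: field_simps)?)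
  have "act_pair (G1c t) (P3_4 (0)) = q1c t"
    unfolding act_pair_def using e1 e2 by (simp add: prod_eq_iff fun_eq_iff)
  then have "\<exists>g. q1c t = act_pair g (P3_4 (0)) \<and> invertible g" using inv_of[OF i1] by metis
  then have "q1c t \<in> orbit (P3_4 (0))" unfolding orbit_def by simp
  then show ?thesis by blast
qed

lemma q1c_cont1: "isCont (\<lambda>t. fst (q1c t) i j k) 0"
  by (cases i; cases j; cases k) (simp_all add: q1c_def)

lemma q1c_cont2: "isCont (\<lambda>t. snd (q1c t) i j k) 0"
  by (cases i; cases j; cases k) (simp_all add: q1c_def)

lemma q1c_0: "q1c 0 = P3_1"
  by (simp add: q1c_def P3_1_def prod_eq_iff fun_eq_iff all_idx)

lemma deg1c: "zariski_closure (orbit P3_1) \<subseteq> zariski_closure (\<Union>\<alpha>. orbit (P3_4 \<alpha>))"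
  using degen_union[of q1c P3_4, OF q1c_in q1c_cont1 q1c_cont2] q1c_0 by simp

definition G2a :: "complex \<Rightarrow> complex^idx^idx" where "G2a t = mat3 (1/2) (1/2) 0 0 0 (1/2) (-1/(2*t)) (1/(2*t)) 0"
definition H2a :: "complex \<Rightarrow> complex^idx^idx" where "H2a t = mat3 1 0 (-t) 1 0 t 0 2 0"
definition q2a :: "complex \<Rightarrow> spair" where "q2a t = (comm_sc [(E1,E1,E2,1),(E3,E3,E2,-(t*t))], lie_sc [(E1,E3,E2,1)])"

lemma q2a_in:
  assumes t: "t \<noteq> 0"
  shows "q2a t \<in> (\<Union>\<alpha>. orbit (P3_16 \<alpha>))"
proof -
  have i1: "G2a t ** H2a t = mat 1" "H2a t ** G2a t = mat 1"
    using t by (simp_all add: mat_eq3 G2a_def H2a_def matrix_matrix_mult_def UNIV_idx mat_def field_simps)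
  have e1: "act (G2a t) (fst (P3_16 (1/t))) i j k = fst (q2a t) i j k" for i j k
    unfolding act_explicit[OF i1]
    using t by (cases i; cases j; cases k) (simp_all add: UNIV_idx G2a_def H2a_def P3_16_def q2a_def, (simp_all add: field_simps)?)
  have e2: "act (G2a t) (snd (P3_16 (1/t))) i j k = snd (q2a t) i j k" for i j k
    unfolding act_explicit[OF i1]
    using t by (cases i; cases j; cases k) (simp_all add: UNIV_idx G2a_def H2a_def P3_16_def q2a_def, (simp_all add: field_simps)?)
  have "act_pair (G2a t) (P3_16 (1/t)) = q2a t"
    unfolding act_pair_def using e1 e2 by (simp add: prod_eq_iff fun_eq_iff)
  then have "\<exists>g. q2a t = act_pair g (P3_16 (1/t)) \<and> invertible g" using inv_of[OF i1] by metis
  then have "q2a t \<in> orbit (P3_16 (1/t))" unfolding orbit_def by simp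
  then show ?thesis by blast
qed

lemma q2a_cont1: "isCont (\<lambda>t. fst (q2a t) i j k) 0"
  by (cases i; cases j; cases k) (simp_all add: q2a_def)

lemma q2a_cont2: "isCont (\<lambda>t. snd (q2a t) i j k) 0"
  by (cases i; cases j; cases k) (simp_all add: q2a_def)

lemma q2a_0: "q2a 0 = P3_15"
  by (simp add: q2a_def P3_15_def prod_eq_iff fun_eq_iff all_idx)

lemma deg2a: "zariski_closure (orbit P3_15) \<subseteq> zariski_closure (\<Union>\<alpha>. orbit (P3_16 \<alpha>))"
  using degen_union[of q2a P3_16, OF q2a_in q2a_cont1 q2a_cont2] q2a_0 by simp

definition G2b :: "complex \<Rightarrow> complex^idx^idx" where "G2b t = mat3 (1/2) (1/2) 0 0 0 (1/2) (-1/(2*t)) (1/(2*t)) 0"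
definition H2b :: "complex \<Rightarrow> complex^idx^idx" where "H2b t = mat3 1 0 (-t) 1 0 t 0 2 0"
definition q2b :: "complex \<Rightarrow> spair" where "q2b t = (comm_sc [(E1,E1,E2,1),(E3,E3,E2,-(t*t))], lie_sc [])"

lemma q2b_in:
  assumes t: "t \<noteq> 0"
  shows "q2b t \<in> (\<Union>\<alpha>. orbit (P3_16 \<alpha>))"
proof -
  have i1: "G2b t ** H2b t = mat 1" "H2b t ** G2b t = mat 1"
    using t by (simp_all add: mat_eq3 G2b_def H2b_def matrix_matrix_mult_def UNIV_idx mat_def field_simps)
  have e1: "act (G2b t) (fst (P3_16 (0))) i j k = fst (q2b t) i j k" for i j k
    unfolding act_explicit[OF i1]
    using t by (cases i; cases j; cases k) (simp_all add: UNIV_idx G2b_def H2b_def P3_16_def q2b_def, (simp_all add: field_simps)?)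
  have e2: "act (G2b t) (snd (P3_16 (0))) i j k = snd (q2b t) i j k" for i j k
    unfolding act_explicit[OF i1]
    using t by (cases i; cases j; cases k) (simp_all add: UNIV_idx G2b_def H2b_def P3_16_def q2b_def, (simp_all add: field_simps)?)
  have "act_pair (G2b t) (P3_16 (0)) = q2b t"
    unfolding act_pair_def using e1 e2 by (simp add: prod_eq_iff fun_eq_iff)
  then have "\<exists>g. q2b t = act_pair g (P3_16 (0)) \<and> invertible g" using inv_of[OF i1] by metis
  then have "q2b t \<in> orbit (P3_16 (0))" unfolding orbit_def by simp
  then show ?thesis by blast
qed

lemma q2b_cont1: "isCont (\<lambda>t. fst (q2b t) i j k) 0"
  by (cases i; cases j; cases k) (simp_all add: q2b_def)

lemma q2b_cont2: "isCont (\<lambda>t. snd (q2b t) i j k) 0"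
  by (cases i; cases j; cases k) (simp_all add: q2b_def)

lemma q2b_0: "q2b 0 = P3_13"
  by (simp add: q2b_def P3_13_def prod_eq_iff fun_eq_iff all_idx)

lemma deg2b: "zariski_closure (orbit P3_13) \<subseteq> zariski_closure (\<Union>\<alpha>. orbit (P3_16 \<alpha>))"
  using degen_union[of q2b P3_16, OF q2b_in q2b_cont1 q2b_cont2] q2b_0 by simp

definition G2c :: "complex \<Rightarrow> complex^idx^idx" where "G2c t = mat3 1 0 0 0 1 0 0 0 t"
definition H2c :: "complex \<Rightarrow> complex^idx^idx" where "H2c t = mat3 1 0 0 0 1 0 0 0 (1/t)"
definition q2c :: "complex \<Rightarrow> spair" where "q2c t = (comm_sc [(E1,E2,E3,t)], lie_sc [(E1,E2,E3,1)])"

lemma q2c_in: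
  assumes t: "t \<noteq> 0"
  shows "q2c t \<in> (\<Union>\<alpha>. orbit (P3_16 \<alpha>))"
proof -
  have i1: "G2c t ** H2c t = mat 1" "H2c t ** G2c t = mat 1"
    using t by (simp_all add: mat_eq3 G2c_def H2c_def matrix_matrix_mult_def UNIV_idx mat_def field_simps)
  have e1: "act (G2c t) (fst (P3_16 (1/t))) i j k = fst (q2c t) i j k" for i j k
    unfolding act_explicit[OF i1]
    using t by (cases i; cases j; cases k) (simp_all add: UNIV_idx G2c_def H2c_def P3_16_def q2c_def, (simp_all add: field_simps)?)
  have e2: "act (G2c t) (snd (P3_16 (1/t))) i j k = snd (q2c t) i j k" for i j k
    unfolding act_explicit[OF i1]
    using t by (cases i; cases j; cases k) (simp_all add: UNIV_idx G2c_def H2c_def P3_16_def q2c_def, (simp_all add: field_simps)?)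
  have "act_pair (G2c t) (P3_16 (1/t)) = q2c t"
    unfolding act_pair_def using e1 e2 by (simp add: prod_eq_iff fun_eq_iff)
  then have "\<exists>g. q2c t = act_pair g (P3_16 (1/t)) \<and> invertible g" using inv_of[OF i1] by metis
  then have "q2c t \<in> orbit (P3_16 (1/t))" unfolding orbit_def by simp
  then show ?thesis by blast
qed

lemma q2c_cont1: "isCont (\<lambda>t. fst (q2c t) i j k) 0"
  by (cases i; cases j; cases k) (simp_all add: q2c_def)

lemma q2c_cont2: "isCont (\<lambda>t. snd (q2c t) i j k) 0"
  by (cases i; cases j; cases k) (simp_all add: q2c_def)

lemma q2c_0: "q2c 0 = P3_2"
  by (simp add: q2c_def P3_2_def prod_eq_iff fun_eq_iff all_idx)

lemma deg2c: "zariski_closure (orbit P3_2) \<subseteq> zariski_closure (\<Union>\<alpha>. orbit (P3_16 \<alpha>))"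
  using degen_union[of q2c P3_16, OF q2c_in q2c_cont1 q2c_cont2] q2c_0 by simp

definition G2d :: "complex \<Rightarrow> complex^idx^idx" where "G2d t = mat3 (1/t) 0 0 0 (1/t) 0 0 0 (1/t)"
definition H2d :: "complex \<Rightarrow> complex^idx^idx" where "H2d t = mat3 t 0 0 0 t 0 0 0 t"
definition q2d :: "complex \<Rightarrow> spair" where "q2d t = (comm_sc [(E1,E2,E3,t)], lie_sc [])"

lemma q2d_in:
  assumes t: "t \<noteq> 0"
  shows "q2d t \<in> (\<Union>\<alpha>. orbit (P3_16 \<alpha>))"
proof -
  have i1: "G2d t ** H2d t = mat 1" "H2d t ** G2d t = mat 1"
    using t by (simp_all add: mat_eq3 G2d_def H2d_def matrix_matrix_mult_def UNIV_idx mat_def field_simps)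
  have e1: "act (G2d t) (fst (P3_16 (0))) i j k = fst (q2d t) i j k" for i j k
    unfolding act_explicit[OF i1]
    using t by (cases i; cases j; cases k) (simp_all add: UNIV_idx G2d_def H2d_def P3_16_def q2d_def, (simp_all add: field_simps)?)
  have e2: "act (G2d t) (snd (P3_16 (0))) i j k = snd (q2d t) i j k" for i j k
    unfolding act_explicit[OF i1]
    using t by (cases i; cases j; cases k) (simp_all add: UNIV_idx G2d_def H2d_def P3_16_def q2d_def, (simp_all add: field_simps)?)
  have "act_pair (G2d t) (P3_16 (0)) = q2d t"
    unfolding act_pair_def using e1 e2 by (simp add: prod_eq_iff fun_eq_iff)
  then have "\<exists>g. q2d t = act_pair g (P3_16 (0)) \<and> invertible g" using inv_of[OF i1] by metis
  then have "q2d t \<in> orbit (P3_16 (0))" unfolding orbit_def by simp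
  then show ?thesis by blast
qed

lemma q2d_cont1: "isCont (\<lambda>t. fst (q2d t) i j k) 0"
  by (cases i; cases j; cases k) (simp_all add: q2d_def)

lemma q2d_cont2: "isCont (\<lambda>t. snd (q2d t) i j k) 0"
  by (cases i; cases j; cases k) (simp_all add: q2d_def)

lemma q2d_0: "q2d 0 = P3_1"
  by (simp add: q2d_def P3_1_def prod_eq_iff fun_eq_iff all_idx)

lemma deg2d: "zariski_closure (orbit P3_1) \<subseteq> zariski_closure (\<Union>\<alpha>. orbit (P3_16 \<alpha>))"
  using degen_union[of q2d P3_16, OF q2d_in q2d_cont1 q2d_cont2] q2d_0 by simp

theorem lemma4p9:
  shows "zariski_closure (orbit P3_3) \<subseteq> zariski_closure (\<Union>\<alpha>. orbit (P3_4 \<alpha>))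
       \<and> zariski_closure (orbit P3_2) \<subseteq> zariski_closure (\<Union>\<alpha>. orbit (P3_4 \<alpha>))
       \<and> zariski_closure (orbit P3_1) \<subseteq> zariski_closure (\<Union>\<alpha>. orbit (P3_4 \<alpha>))
       \<and> zariski_closure (orbit P3_15) \<subseteq> zariski_closure (\<Union>\<alpha>. orbit (P3_16 \<alpha>))
       \<and> zariski_closure (orbit P3_13) \<subseteq> zariski_closure (\<Union>\<alpha>. orbit (P3_16 \<alpha>))
       \<and> zariski_closure (orbit P3_2) \<subseteq> zariski_closure (\<Union>\<alpha>. orbit (P3_16 \<alpha>))
       \<and> zariski_closure (orbit P3_1) \<subseteq> zariski_closure (\<Union>\<alpha>. orbit (P3_16 \<alpha>))"
  using deg1a deg1b deg1c deg2a deg2b deg2c deg2d by blast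

end
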